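(* Let $\mathbf a:\mathbb R^D\to\mathcal H$ define a CMF dictionary with kernel $\kappa$, $D\ge1$. Let $\mathcal S^\star=\{\theta^\star_1,\theta^\star_2\}$ with $\theta^\star_1\ne\theta^\star_2$, let $\mathbf G\in\mathbb R^{2\times2}$, $\mathbf G[\ell,\ell']=\kappa(\theta^\star_\ell,\theta^\star_{\ell'})$, and $\mathbf g_\theta\in\mathbb R^2$, $\mathbf g_\theta[\ell]=\kappa(\theta,\theta^\star_\ell)$. If $\|\mathbf G^{-1}\mathbf g_\theta\|_1<1$ for every $\theta\in\mathrm{Cart}(\mathcal S^\star)\setminus\mathcal S^\star$, then OMP achieves exact $2$-step recovery of $\mathcal S^\star$.
   Context: CMF: $\varphi:[0,\infty)\to\mathbb R$ infinitely differentiable on $(0,\infty)$, right-continuous at $0$, $(-1)^n\varphi^{(n)}(x)\ge0$ for $x>0$, $n\ge0$. A CMF dictionary in dimension $D$ is $\mathbf a:\mathbb R^D\to\mathcal H$ ($\mathcal H$ real Hilbert) with $\kappa(\theta,\theta')=\langle\mathbf a(\theta),\mathbf a(\theta')\rangle=\varphi(\|\theta-\theta'\|_p^p)$, $\varphi$ a CMF, $\varphi(0)=1$, $\lim_{x\to\infty}\varphi(x)=0$, $0<p\le1$. $\mathrm{Cart}(\mathcal S)=\prod_{d=1}^D\{\theta[d]:\theta\in\mathcal S\}$. OMP with input $\mathbf y$: $\mathbf r=\mathbf y$, $\widehat{\mathcal S}=\emptyset$; while $\mathbf r\ne0$: choose any $\widehat\theta_t\in\arg\max_\theta|\langle\mathbf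 a(\theta),\mathbf r\rangle|$, add it to $\widehat{\mathcal S}$, set $\mathbf r$ to $\mathbf y$ minus its orthogonal projection onto $\mathrm{span}\{\mathbf a(\widehat\theta_1),\dots,\mathbf a(\widehat\theta_t)\}$. A reachable support is any final $\widehat{\mathcal S}$ obtainable through some choices of maximizers. Exact $2$-step recovery of $\mathcal S^\star$: for all nonzero $c_1,c_2$, every reachable support of OMP with input $c_1\mathbf a(\theta^\star_1)+c_2\mathbf a(\theta^\star_2)$ equals $\mathcal S^\star$. *)

theory Defs
  imports "HOL-Analysis.Analysis"
begin

definition CMF :: "(real \<Rightarrow> real) \<Rightarrow> bool" where
  "CMF \<phi> \<longleftrightarrow>
     (\<forall>n::nat. \<forall>x>0. ((deriv ^^ n) \<phi> has_real_derivative (deriv ^^ Suc n) \<phi> x) (at x)) \<and>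
     continuous (at_right 0) \<phi> \<and>
     (\<forall>n::nat. \<forall>x>0. (-1) ^ n * (deriv ^^ n) \<phi> x \<ge> 0)"

definition lp_pow :: "real \<Rightarrow> real^'d \<Rightarrow> real^'d \<Rightarrow> real" where
  "lp_pow p \<theta> \<theta>' = (\<Sum>d\<in>UNIV. \<bar>\<theta> $ d - \<theta>' $ d\<bar> powr p)"

definition CMF_dictionary ::
  "(real^'d \<Rightarrow> 'h::{real_inner,complete_space}) \<Rightarrow> (real \<Rightarrow> real) \<Rightarrow> real \<Rightarrow> bool" where
  "CMF_dictionary a \<phi> p \<longleftrightarrow>
     CMF \<phi> \<and> \<phi> 0 = 1 \<and> (\<phi> \<longlongrightarrow> 0) at_top \<and> 0 < p \<and> p \<le> 1 \<and>
     (\<forall>\<theta> \<theta>'. inner (a \<theta>) (a \<theta>') = \<phi> (lp_pow p \<theta> \<theta>'))"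

definition kernel :: "(real^'d \<Rightarrow> 'h::real_inner) \<Rightarrow> real^'d \<Rightarrow> real^'d \<Rightarrow> real" where
  "kernel a \<theta> \<theta>' = inner (a \<theta>) (a \<theta>')"

definition orth_proj :: "'h::real_inner set \<Rightarrow> 'h \<Rightarrow> 'h" where
  "orth_proj W y = (THE v. v \<in> W \<and> (\<forall>w\<in>W. inner (y - v) w = 0))"

definition omp_residual :: "(real^'d \<Rightarrow> 'h::real_inner) \<Rightarrow> 'h \<Rightarrow> (real^'d) set \<Rightarrow> 'h" where
  "omp_residual a y S = y - orth_proj (span (a ` S)) y"

text \<open>States (support, residual) reachable by OMP on input y, for some choice of maximizers.\<close>
inductive omp_state :: "(real^'d \<Rightarrow> 'h::real_inner) \<Rightarrow> 'h \<Rightarrow> (real^'d) set \<Rightarrow> 'h \<Rightarrow> bool"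
  for a :: "real^'d \<Rightarrow> 'h" and y :: 'h where
  init: "omp_state a y {} y"
| step: "\<lbrakk> omp_state a y S r; r \<noteq> 0;
           \<forall>\<theta>. \<bar>inner (a \<theta>) r\<bar> \<le> \<bar>inner (a \<theta>t) r\<bar> \<rbrakk>
         \<Longrightarrow> omp_state a y (insert \<theta>t S) (omp_residual a y (insert \<theta>t S))"

definition omp_reachable_support :: "(real^'d \<Rightarrow> 'h::real_inner) \<Rightarrow> 'h \<Rightarrow> (real^'d) set \<Rightarrow> bool" where
  "omp_reachable_support a y S \<longleftrightarrow> omp_state a y S 0"

definition exact_2step_recovery :: "(real^'d \<Rightarrow> 'h::real_inner) \<Rightarrow> real^'d \<Rightarrow> real^'d \<Rightarrow> bool" where
  "exact_2step_recovery a t1 t2 \<longleftrightarrow>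
     (\<forall>c1 c2 :: real. c1 \<noteq> 0 \<longrightarrow> c2 \<noteq> 0 \<longrightarrow>
        (\<forall>S. omp_reachable_support a (c1 *\<^sub>R a t1 + c2 *\<^sub>R a t2) S \<longrightarrow> S = {t1, t2}))"

definition Cart :: "(real^'d) set \<Rightarrow> (real^'d) set" where
  "Cart S = {\<theta>. \<forall>d. \<theta> $ d \<in> (\<lambda>t. t $ d) ` S}"

end

theory Submission
  imports Defs
begin

locale phiL =
  fixes \<phi> D1 D2 :: "real \<Rightarrow> real"
  assumes cont: "continuous_on {0..} \<phi>"
  and phi0: "\<phi> 0 = 1"
  and lim: "(\<phi> \<longlongrightarrow> 0) at_top"
  and nonneg: "\<And>x. 0 < x \<Longrightarrow> 0 \<le> \<phi> x"
  and d1: "\<And>x. 0 < x \<Longrightarrow> (\<phi> has_real_derivative D1 x) (at x)"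
  and d2: "\<And>x. 0 < x \<Longrightarrow> (D1 has_real_derivative D2 x) (at x)"
  and s1: "\<And>x. 0 < x \<Longrightarrow> D1 x \<le> 0"
  and s2: "\<And>x. 0 < x \<Longrightarrow> 0 \<le> D2 x"
  and d2m: "\<And>x y. 0 < x \<Longrightarrow> x \<le> y \<Longrightarrow> D2 y \<le> D2 x"
begin

lemma nonneg0: "0 \<le> x \<Longrightarrow> 0 \<le> \<phi> x"
  using nonneg phi0 by (cases "x = 0") auto

lemma mvt0:
  assumes "0 \<le> a" "a < b"
  shows "\<exists>z. a < z \<and> z < b \<and> \<phi> b - \<phi> a = (b - a) * D1 z"
proof -
  have "continuous_on {a..b} \<phi>" using cont by (rule continuous_on_subset) (use assms in auto)
  moreover have "\<And>x. a < x \<Longrightarrow> x < b \<Longrightarrow> \<phi> differentiable (at x)"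
    using d1 assms real_differentiable_def by (metis le_less_trans)
  ultimately obtain l z where z: "a<z" "z<b" "(\<phi> has_real_derivative l) (at z)" "\<phi> b - \<phi> a = (b-a)*l"
    using MVT[OF assms(2)] by blast
  moreover have "l = D1 z" using d1[of z] z assms DERIV_unique by force
  ultimately show ?thesis by blast
qed

lemma mvt1:
  assumes "0 < a" "a < b"
  shows "\<exists>z. a < z \<and> z < b \<and> D1 b - D1 a = (b - a) * D2 z"
proof -
  have "\<forall>x. a \<le> x \<and> x \<le> b \<longrightarrow> DERIV D1 x :> D2 x" using d2 assms by auto
  then show ?thesis using MVT2[OF assms(2)] by blast
qed

lemma mono: assumes "0 \<le> x" "x \<le> y" shows "\<phi> y \<le> \<phi> x"
proof (cases "x = y")
  case False
  then obtain z where "x < z" "z < y" "\<phi> y - \<phi> x = (y - x) * D1 z" using mvt0[of x y] assms by auto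
  moreover have "D1 z \<le> 0" using s1 \<open>x < z\<close> assms by auto
  ultimately show ?thesis using assms by (smt (verit) mult_nonneg_nonpos)
qed simp

lemma D1mono: assumes "0 < x" "x \<le> y" shows "D1 x \<le> D1 y"
proof (cases "x = y")
  case False
  then obtain z where "x < z" "z < y" "D1 y - D1 x = (y - x) * D2 z" using mvt1[of x y] assms by auto
  moreover have "0 \<le> D2 z" using s2 \<open>x < z\<close> assms by auto
  ultimately show ?thesis using assms by (smt (verit) mult_nonneg_nonneg)
qed simp

lemma const_lim: assumes "\<And>z. z \<ge> x \<Longrightarrow> \<phi> z = v" shows "v = 0"
proof -
  have "eventually (\<lambda>z. \<phi> z = v) at_top" using assms eventually_at_top_linorder by blast
  then have "(\<phi> \<longlongrightarrow> v) at_top" by (simp add: tendsto_eventually)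
  then show ?thesis using lim tendsto_unique trivial_limit_at_top_linorder by blast
qed

lemma key:
  assumes "0 < x" "x < y" "D1 x = D1 y"
  shows "D1 x = 0 \<and> (\<forall>z\<ge>x. \<phi> z = 0)"
proof -
  obtain w where w: "x < w" "w < y" "D1 y - D1 x = (y - x) * D2 w" using mvt1[of x y] assms by auto
  then have D2w: "D2 w = 0" using assms by simp
  have c: "D1 z = D1 x" if "z \<ge> x" for z
  proof (cases "z \<le> y")
    case True
    then show ?thesis using D1mono[of x z] D1mono[of z y] assms that by auto
  next
    case False
    then obtain u where u: "y < u" "u < z" "D1 z - D1 y = (z - y) * D2 u" using mvt1[of y z] assms by auto
    have "D2 u \<le> 0" using d2m[of w u] w u assms D2w by auto
    then have "D1 z \<le> D1 y" using u False by (smt (verit) mult_nonneg_nonpos)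
    moreover have "D1 y \<le> D1 z" using D1mono[of y z] False assms by auto
    ultimately show ?thesis using assms by auto
  qed
  have lin: "\<phi> z = \<phi> x + (z - x) * D1 x" if zx: "z \<ge> x" for z
  proof (cases "z = x")
    case False
    then obtain v where "x < v" "v < z" "\<phi> z - \<phi> x = (z - x) * D1 v" using mvt0[of x z] assms zx False by fastforce
    then show ?thesis using c[of v] by auto
  qed simp
  have "D1 x = 0"
  proof (rule ccontr)
    assume "D1 x \<noteq> 0"
    then have neg: "D1 x < 0" using s1 assms by force
    define a where "a = \<bar>\<phi> x\<bar> + 1"
    define z where "z = x + a / (- D1 x)"
    have "a > 0" unfolding a_def by simp
    have "z \<ge> x" unfolding z_def using neg \<open>a > 0\<close> by (simp add: divide_pos_neg less_imp_le)
    have "z - x = a / (- D1 x)" unfolding z_def by simp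
    also have "\<dots> * D1 x = - a" using neg by (simp add: divide_simps)
    finally have "(z - x) * D1 x = - a" .
    then have "\<phi> z = \<phi> x - a" using lin[OF \<open>z \<ge> x\<close>] by linarith
    moreover have "0 \<le> \<phi> z" using nonneg[of z] \<open>z \<ge> x\<close> assms(1) by linarith
    ultimately show False unfolding a_def by linarith
  qed
  moreover have cz: "\<phi> z = \<phi> x" if "z \<ge> x" for z using lin[OF that] by (simp add: \<open>D1 x = 0\<close>)
  moreover have "\<phi> x = 0" using const_lim[of x "\<phi> x"] cz by blast
  ultimately show ?thesis by simp
qed

lemma lt1: assumes "0 < x" shows "\<phi> x < 1"
proof (rule ccontr)
  assume "\<not> \<phi> x < 1"
  then have e: "\<phi> x = 1" using mono[of 0 x] phi0 assms by auto
  obtain z where z: "0 < z" "z < x" "\<phi> x - \<phi> 0 = (x - 0) * D1 z" using mvt0[of 0 x] assms by auto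
  then have "D1 z = 0" using e phi0 assms by simp
  moreover have "D1 (z+1) = 0" using D1mono[of z "z+1"] s1[of "z+1"] z \<open>D1 z = 0\<close> by auto
  ultimately have "\<phi> x = 0" using key[of z "z+1"] z by auto
  then show False using e by simp
qed


lemma chord:
  assumes "0 < x" "x < \<Delta>"
  shows "\<Delta> * \<phi> x < \<Delta> - x * (1 - \<phi> \<Delta>)"
proof -
  obtain u where u: "0 < u" "u < x" "\<phi> x - \<phi> 0 = (x - 0) * D1 u" using mvt0[of 0 x] assms by auto
  obtain v where v: "x < v" "v < \<Delta>" "\<phi> \<Delta> - \<phi> x = (\<Delta> - x) * D1 v" using mvt0[of x \<Delta>] assms by auto
  have le: "D1 u \<le> D1 v" using D1mono[of u v] u v by auto
  have "D1 u \<noteq> D1 v"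
  proof
    assume "D1 u = D1 v"
    then have "D1 u = 0" using key[of u v] u v by auto
    then have "\<phi> x = 1" using u phi0 by simp
    then show False using lt1[of x] assms by simp
  qed
  then have lt: "D1 u < D1 v" using le by simp
  have e1: "\<phi> x = 1 + x * D1 u" using u phi0 by simp
  have e2: "\<phi> \<Delta> = 1 + x * D1 u + (\<Delta> - x) * D1 v" using v e1 by simp
  have "\<Delta> * \<phi> x - (\<Delta> - x * (1 - \<phi> \<Delta>)) = x * (\<Delta> - x) * (D1 u - D1 v)"
    unfolding e2 e1 by (simp add: algebra_simps)
  moreover have "x * (\<Delta> - x) * (D1 u - D1 v) < 0"
    using assms lt by (simp add: mult_pos_neg)
  ultimately show ?thesis by linarith
qed

lemma incr:
  assumes "0 < P" "0 < \<Delta>"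
  shows "\<phi> P - \<phi> (P + \<Delta>) < 1 - \<phi> \<Delta>"
proof -
  define w where "w = (\<lambda>x. \<phi> x - \<phi> (x + \<Delta>))"
  have c1: "continuous_on {0..P} \<phi>" using cont by (rule continuous_on_subset) auto
  have c2: "continuous_on {0..P} (\<lambda>x. \<phi> (x + \<Delta>))"
  proof (rule continuous_on_compose2[OF cont])
    show "continuous_on {0..P} (\<lambda>x. x + \<Delta>)" by (intro continuous_intros)
    show "(\<lambda>x. x + \<Delta>) ` {0..P} \<subseteq> {0..}" using assms by auto
  qed
  have dw: "(w has_real_derivative (D1 z - D1 (z + \<Delta>))) (at z)" if "0 < z" for z
  proof -
    have "((\<lambda>x. \<phi> (x + \<Delta>)) has_real_derivative D1 (z + \<Delta>)) (at z)"
      using d1[of "z + \<Delta>"] that assms DERIV_shift by auto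
    then show ?thesis unfolding w_def using d1[OF that] by (intro DERIV_diff)
  qed
  have "continuous_on {0..P} w" unfolding w_def using c1 c2 by (intro continuous_on_diff)
  moreover have "\<And>x. 0 < x \<Longrightarrow> x < P \<Longrightarrow> w differentiable (at x)"
    using dw real_differentiable_def by blast
  ultimately obtain l z where z: "0 < z" "z < P" "(w has_real_derivative l) (at z)" "w P - w 0 = (P - 0) * l"
    using MVT[OF assms(1)] by blast
  then have l: "l = D1 z - D1 (z + \<Delta>)" using dw[of z] DERIV_unique by blast
  have le: "D1 z \<le> D1 (z + \<Delta>)" using D1mono[of z "z + \<Delta>"] z assms by auto
  have "D1 z \<noteq> D1 (z + \<Delta>)"
  proof
    assume "D1 z = D1 (z + \<Delta>)"
    then have "\<forall>y\<ge>z. \<phi> y = 0" using key[of z "z + \<Delta>"] z assms by auto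
    then have "w P = 0" unfolding w_def using z assms by auto
    moreover have "l = 0" using l \<open>D1 z = D1 (z + \<Delta>)\<close> by simp
    ultimately have "\<phi> \<Delta> = 1" using z(4) unfolding w_def using phi0 by simp
    then show False using lt1[of \<Delta>] assms by simp
  qed
  then have "l < 0" using l le by simp
  then have "P * l < 0" using assms by (simp add: mult_pos_neg)
  then have "w P < w 0" using z(4) by simp
  then show ?thesis unfolding w_def using phi0 by simp
qed

lemma incr_le:
  assumes "0 \<le> P" "0 < \<Delta>"
  shows "\<phi> P - \<phi> (P + \<Delta>) \<le> 1 - \<phi> \<Delta>"
  using incr[of P \<Delta>] assms phi0 by (cases "P = 0") auto


lemma pospos:
  assumes c: "c1 > 0" "c2 > 0" and D: "0 < \<Delta>"
    and R: "0 \<le> P" "0 \<le> Q" "\<Delta> \<le> P + Q" "P \<le> Q + \<Delta>" "Q \<le> P + \<Delta>"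
    and ex: "\<not> (P = 0 \<and> Q = \<Delta>)" "\<not> (P = \<Delta> \<and> Q = 0)"
  shows "c1 * \<phi> P + c2 * \<phi> Q < max (c1 + c2 * \<phi> \<Delta>) (c1 * \<phi> \<Delta> + c2)"
proof -
  consider "P = 0" | "\<Delta> \<le> P" | "0 < P \<and> P < \<Delta>" using R by linarith
  then show ?thesis
  proof cases
    case 1 then show ?thesis using R ex by auto
  next
    case 2
    then have "Q > 0" using R ex by auto
    then have "\<phi> Q < 1" by (rule lt1)
    moreover have "\<phi> P \<le> \<phi> \<Delta>" using mono[of \<Delta> P] 2 D by auto
    ultimately have "c2 * \<phi> Q < c2 * 1" "c1 * \<phi> P \<le> c1 * \<phi> \<Delta>"
      using c by (auto intro: mult_strict_left_mono mult_left_mono)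
    then have "c1 * \<phi> P + c2 * \<phi> Q < c1 * \<phi> \<Delta> + c2" by linarith
    then show ?thesis by linarith
  next
    case 3
    have q: "\<phi> Q \<le> \<phi> (\<Delta> - P)" using mono[of "\<Delta> - P" Q] 3 R by auto
    have h1: "\<Delta> * \<phi> P < \<Delta> - P * (1 - \<phi> \<Delta>)" using chord[of P \<Delta>] 3 by auto
    have h2: "\<Delta> * \<phi> (\<Delta> - P) < \<Delta> - (\<Delta> - P) * (1 - \<phi> \<Delta>)" using chord[of "\<Delta> - P" \<Delta>] 3 by auto
    define A where "A = c1 + c2 * \<phi> \<Delta>"
    define B where "B = c1 * \<phi> \<Delta> + c2"
    have "c2 * \<phi> Q \<le> c2 * \<phi> (\<Delta> - P)" by (rule mult_left_mono) (use q c in auto)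
    then have "\<Delta> * (c1 * \<phi> P + c2 * \<phi> Q) \<le> \<Delta> * (c1 * \<phi> P + c2 * \<phi> (\<Delta> - P))"
      by (intro mult_left_mono) (use D in auto)
    also have "\<dots> = c1 * (\<Delta> * \<phi> P) + c2 * (\<Delta> * \<phi> (\<Delta> - P))" by (simp add: algebra_simps)
    also have "\<dots> < c1 * (\<Delta> - P * (1 - \<phi> \<Delta>)) + c2 * (\<Delta> - (\<Delta> - P) * (1 - \<phi> \<Delta>))"
      using mult_strict_left_mono[OF h1 c(1)] mult_strict_left_mono[OF h2 c(2)] by linarith
    also have "\<dots> = (\<Delta> - P) * A + P * B" unfolding A_def B_def by (simp add: algebra_simps)
    also have "\<dots> \<le> (\<Delta> - P) * max A B + P * max A B"
      using 3 by (intro add_mono mult_left_mono) auto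
    also have "\<dots> = \<Delta> * max A B" by (simp add: algebra_simps)
    finally have "\<Delta> * (c1 * \<phi> P + c2 * \<phi> Q) < \<Delta> * max A B" .
    then show ?thesis unfolding A_def B_def using D by simp
  qed
qed

lemma posneg:
  assumes c: "c1 > 0" "k > 0" and D: "0 < \<Delta>"
    and R: "0 \<le> P" "0 \<le> Q" "\<Delta> \<le> P + Q" "P \<le> Q + \<Delta>" "Q \<le> P + \<Delta>"
    and ex: "\<not> (P = 0 \<and> Q = \<Delta>)"
  shows "c1 * \<phi> P - k * \<phi> Q < max \<bar>c1 - k * \<phi> \<Delta>\<bar> \<bar>c1 * \<phi> \<Delta> - k\<bar>"
proof -
  have P: "P > 0" using R ex by (cases "P = 0") auto
  have q: "\<phi> (P + \<Delta>) \<le> \<phi> Q" using mono[of Q "P + \<Delta>"] R by auto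
  have h: "c1 * \<phi> P - k * \<phi> Q \<le> c1 * \<phi> P - k * \<phi> (P + \<Delta>)" using q c by simp
  have inc: "\<phi> P - \<phi> (P + \<Delta>) < 1 - \<phi> \<Delta>" using incr[OF P D] .
  have nn: "0 \<le> \<phi> (P + \<Delta>)" using nonneg P D by simp
  have p1: "\<phi> P < 1" using lt1[OF P] .
  consider "k > c1" | "k < c1" | "k = c1" by linarith
  then show ?thesis
  proof cases
    case 1
    have "c1 * \<phi> P - k * \<phi> (P + \<Delta>) = c1 * (\<phi> P - \<phi> (P + \<Delta>)) - (k - c1) * \<phi> (P + \<Delta>)"
      by (simp add: algebra_simps)
    also have "\<dots> \<le> c1 * (1 - \<phi> \<Delta>)"
    proof -
      have "c1 * (\<phi> P - \<phi> (P + \<Delta>)) \<le> c1 * (1 - \<phi> \<Delta>)"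
        by (rule mult_left_mono) (use inc c in auto)
      moreover have "0 \<le> (k - c1) * \<phi> (P + \<Delta>)" using nn 1 by simp
      ultimately show ?thesis by linarith
    qed
    also have "\<dots> < k - c1 * \<phi> \<Delta>" using 1 by (simp add: algebra_simps)
    also have "\<dots> \<le> max \<bar>c1 - k * \<phi> \<Delta>\<bar> \<bar>c1 * \<phi> \<Delta> - k\<bar>" by simp
    finally show ?thesis using h by linarith
  next
    case 2
    have "c1 * \<phi> P - k * \<phi> (P + \<Delta>) = (c1 - k * \<phi> \<Delta>) + c1 * (\<phi> P - 1) - k * (\<phi> (P + \<Delta>) - \<phi> \<Delta>)"
      by (simp add: algebra_simps)
    also have "\<dots> \<le> (c1 - k * \<phi> \<Delta>) + (c1 - k) * (\<phi> P - 1)"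
    proof -
      have "\<phi> P - 1 \<le> \<phi> (P + \<Delta>) - \<phi> \<Delta>" using inc by simp
      then have "k * (\<phi> P - 1) \<le> k * (\<phi> (P + \<Delta>) - \<phi> \<Delta>)" using c by simp
      then show ?thesis by (simp add: algebra_simps)
    qed
    also have "\<dots> < c1 - k * \<phi> \<Delta>" using 2 p1 by (simp add: mult_pos_neg)
    also have "\<dots> \<le> max \<bar>c1 - k * \<phi> \<Delta>\<bar> \<bar>c1 * \<phi> \<Delta> - k\<bar>" by simp
    finally show ?thesis using h by linarith
  next
    case 3
    have "c1 * \<phi> P - k * \<phi> (P + \<Delta>) = c1 * (\<phi> P - \<phi> (P + \<Delta>))" using 3 by (simp add: algebra_simps)
    also have "\<dots> < c1 * (1 - \<phi> \<Delta>)" using inc c by simp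
    also have "\<dots> = c1 - k * \<phi> \<Delta>" using 3 by (simp add: algebra_simps)
    also have "\<dots> \<le> max \<bar>c1 - k * \<phi> \<Delta>\<bar> \<bar>c1 * \<phi> \<Delta> - k\<bar>" by simp
    finally show ?thesis using h by linarith
  qed
qed

lemma key1:
  assumes c: "c1 \<noteq> 0" "c2 \<noteq> 0" and D: "0 < \<Delta>"
    and R: "0 \<le> P" "0 \<le> Q" "\<Delta> \<le> P + Q" "P \<le> Q + \<Delta>" "Q \<le> P + \<Delta>"
    and ex: "\<not> (P = 0 \<and> Q = \<Delta>)" "\<not> (P = \<Delta> \<and> Q = 0)"
  shows "c1 * \<phi> P + c2 * \<phi> Q < max \<bar>c1 + c2 * \<phi> \<Delta>\<bar> \<bar>c1 * \<phi> \<Delta> + c2\<bar>"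
proof -
  have r0: "0 \<le> \<phi> \<Delta>" "\<phi> \<Delta> < 1" using nonneg[OF D] lt1[OF D] by auto
  consider "c1 < 0 \<and> c2 < 0" | "c1 > 0 \<and> c2 > 0" | "c1 > 0 \<and> c2 < 0" | "c1 < 0 \<and> c2 > 0"
    using c by linarith
  then show ?thesis
  proof cases
    case 1
    have "c1 * \<phi> P \<le> 0" "c2 * \<phi> Q \<le> 0" "c2 * \<phi> \<Delta> \<le> 0"
      using 1 nonneg0[OF R(1)] nonneg0[OF R(2)] r0 by (auto intro: mult_nonpos_nonneg)
    then have "c1 * \<phi> P + c2 * \<phi> Q \<le> 0" "c1 + c2 * \<phi> \<Delta> < 0" using 1 by linarith+
    then show ?thesis by linarith
  next
    case 2
    have "c1 * \<phi> P + c2 * \<phi> Q < max (c1 + c2 * \<phi> \<Delta>) (c1 * \<phi> \<Delta> + c2)"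
      using pospos[of c1 c2 \<Delta> P Q] 2 D R ex by blast
    then show ?thesis by linarith
  next
    case 3
    have "c1 * \<phi> P - (- c2) * \<phi> Q < max \<bar>c1 - (- c2) * \<phi> \<Delta>\<bar> \<bar>c1 * \<phi> \<Delta> - (- c2)\<bar>"
      using posneg[of c1 "- c2" \<Delta> P Q] 3 D R ex by auto
    then show ?thesis by simp
  next
    case 4
    have "c2 * \<phi> Q - (- c1) * \<phi> P < max \<bar>c2 - (- c1) * \<phi> \<Delta>\<bar> \<bar>c2 * \<phi> \<Delta> - (- c1)\<bar>"
      using posneg[of c2 "- c1" \<Delta> Q P] 4 D R ex by auto
    then show ?thesis by (simp add: algebra_simps max.commute)
  qed
qed

lemma key2:
  assumes c: "c1 \<noteq> 0" "c2 \<noteq> 0" and D: "0 < \<Delta>"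
    and R: "0 \<le> P" "0 \<le> Q" "\<Delta> \<le> P + Q" "P \<le> Q + \<Delta>" "Q \<le> P + \<Delta>"
    and ex: "\<not> (P = 0 \<and> Q = \<Delta>)" "\<not> (P = \<Delta> \<and> Q = 0)"
  shows "\<bar>c1 * \<phi> P + c2 * \<phi> Q\<bar> < max \<bar>c1 + c2 * \<phi> \<Delta>\<bar> \<bar>c1 * \<phi> \<Delta> + c2\<bar>"
proof -
  have a: "c1 * \<phi> P + c2 * \<phi> Q < max \<bar>c1 + c2 * \<phi> \<Delta>\<bar> \<bar>c1 * \<phi> \<Delta> + c2\<bar>"
    using key1[OF c D R ex] .
  have "(-c1) * \<phi> P + (-c2) * \<phi> Q < max \<bar>(-c1) + (-c2) * \<phi> \<Delta>\<bar> \<bar>(-c1) * \<phi> \<Delta> + (-c2)\<bar>"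
    using key1[of "-c1" "-c2", OF _ _ D R ex] c by simp
  then have b: "- (c1 * \<phi> P + c2 * \<phi> Q) < max \<bar>c1 + c2 * \<phi> \<Delta>\<bar> \<bar>c1 * \<phi> \<Delta> + c2\<bar>"
    by (simp add: abs_minus_commute algebra_simps)
  show ?thesis using a b by linarith
qed

end


lemma powr_subadd:
  fixes a b p :: real
  assumes "0 \<le> a" "0 \<le> b" "0 < p" "p \<le> 1"
  shows "(a + b) powr p \<le> a powr p + b powr p"
proof (cases "a + b = 0")
  case True
  then show ?thesis using assms by simp
next
  case False
  define s where "s = a + b"
  have s: "s > 0" using False assms unfolding s_def by simp
  have ge: "x powr p \<ge> x * s powr (p - 1)" if "0 \<le> x" "x \<le> s" for x
  proof (cases "x = 0")
    case True then show ?thesis by simp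
  next
    case False
    then have x: "x > 0" using that by simp
    have "x powr p = x * x powr (p - 1)"
      using x by (simp add: powr_mult_base)
    moreover have "s powr (p - 1) \<le> x powr (p - 1)"
      using powr_mono2'[of "p - 1" x s] x that assms by simp
    ultimately show ?thesis using x by (simp add: mult_left_mono)
  qed
  have "s powr p = s * s powr (p - 1)" using s by (simp add: powr_mult_base)
  also have "\<dots> = a * s powr (p - 1) + b * s powr (p - 1)" unfolding s_def by (simp add: algebra_simps)
  also have "\<dots> \<le> a powr p + b powr p"
    using ge[of a] ge[of b] assms unfolding s_def by (intro add_mono) auto
  finally show ?thesis unfolding s_def .
qed

lemma abs_powr_tri:
  fixes x y z p :: real
  assumes "0 < p" "p \<le> 1"
  shows "\<bar>x - z\<bar> powr p \<le> \<bar>x - y\<bar> powr p + \<bar>y - z\<bar> powr p"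
proof -
  have "\<bar>x - z\<bar> powr p \<le> (\<bar>x - y\<bar> + \<bar>y - z\<bar>) powr p"
    using assms by (intro powr_mono2) auto
  also have "\<dots> \<le> \<bar>x - y\<bar> powr p + \<bar>y - z\<bar> powr p"
    using assms by (intro powr_subadd) auto
  finally show ?thesis .
qed

lemma lp_tri:
  assumes "0 < p" "p \<le> 1"
  shows "lp_pow p x z \<le> lp_pow p x y + lp_pow p y z"
  unfolding lp_pow_def sum.distrib[symmetric]
  using abs_powr_tri[OF assms] by (intro sum_mono) auto

lemma lp_sym: "lp_pow p x y = lp_pow p y x"
  unfolding lp_pow_def by (simp add: abs_minus_commute)

lemma lp_nonneg: "0 \<le> lp_pow p x y"
  unfolding lp_pow_def by (intro sum_nonneg) auto

lemma lp_self: "lp_pow p x x = 0"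
  unfolding lp_pow_def by simp

lemma lp_zero: assumes "lp_pow p x y = 0" shows "x = y"
proof -
  have "\<forall>d\<in>UNIV. \<bar>x $ d - y $ d\<bar> powr p = 0"
    using assms unfolding lp_pow_def by (subst sum_nonneg_eq_0_iff[symmetric]) auto
  then show ?thesis by (simp add: vec_eq_iff)
qed

lemma orth_proj_eq:
  fixes W :: "'h::real_inner set"
  assumes "subspace W" "v \<in> W" "\<forall>w\<in>W. inner (y - v) w = 0"
  shows "orth_proj W y = v"
  unfolding orth_proj_def
proof (rule the_equality)
  show "v \<in> W \<and> (\<forall>w\<in>W. inner (y - v) w = 0)" using assms by blast
  fix v' assume v': "v' \<in> W \<and> (\<forall>w\<in>W. inner (y - v') w = 0)"
  have d: "v - v' \<in> W" using assms v' by (simp add: subspace_diff)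
  have "inner (y - v') (v - v') - inner (y - v) (v - v') = 0" using assms v' d by simp
  then have "inner (v - v') (v - v') = 0" by (simp add: inner_diff_left)
  then show "v' = v" by simp
qed



context phiL begin

lemma step1:
  fixes a :: "real^'d \<Rightarrow> 'h::real_inner"
  assumes p: "0 < p" "p \<le> 1" and ker: "\<And>x y. inner (a x) (a y) = \<phi> (lp_pow p x y)"
    and dist: "t1 \<noteq> t2" and c: "c1 \<noteq> 0" "c2 \<noteq> 0"
    and mx: "\<forall>\<theta>. \<bar>inner (a \<theta>) (c1 *\<^sub>R a t1 + c2 *\<^sub>R a t2)\<bar> \<le> \<bar>inner (a th) (c1 *\<^sub>R a t1 + c2 *\<^sub>R a t2)\<bar>"
  shows "th = t1 \<or> th = t2"
proof (rule ccontr)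
  assume nt: "\<not> (th = t1 \<or> th = t2)"
  have iv: "inner (a \<theta>) (c1 *\<^sub>R a t1 + c2 *\<^sub>R a t2) = c1 * \<phi> (lp_pow p \<theta> t1) + c2 * \<phi> (lp_pow p \<theta> t2)" for \<theta>
    by (simp add: inner_add_right ker)
  define P where "P = lp_pow p th t1"
  define Q where "Q = lp_pow p th t2"
  define \<Delta> where "\<Delta> = lp_pow p t1 t2"
  have D: "0 < \<Delta>" using lp_nonneg[of p t1 t2] lp_zero[of p t1 t2] dist unfolding \<Delta>_def by force
  have P0: "P \<noteq> 0" using lp_zero[of p th t1] nt unfolding P_def by auto
  have Q0: "Q \<noteq> 0" using lp_zero[of p th t2] nt unfolding Q_def by auto
  have R: "0 \<le> P" "0 \<le> Q" "\<Delta> \<le> P + Q" "P \<le> Q + \<Delta>" "Q \<le> P + \<Delta>"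
    unfolding P_def Q_def \<Delta>_def
    using lp_nonneg lp_tri[OF p, where x=t1 and y=th and z=t2] lp_tri[OF p, where x=th and y=t2 and z=t1] lp_tri[OF p, where x=th and y=t1 and z=t2]
      lp_sym[of p th t1] lp_sym[of p t2 t1] by auto
  have "\<bar>c1 * \<phi> P + c2 * \<phi> Q\<bar> < max \<bar>c1 + c2 * \<phi> \<Delta>\<bar> \<bar>c1 * \<phi> \<Delta> + c2\<bar>"
    using key2[OF c D R] P0 Q0 by blast
  moreover have "\<bar>c1 + c2 * \<phi> \<Delta>\<bar> \<le> \<bar>c1 * \<phi> P + c2 * \<phi> Q\<bar>"
    using mx[rule_format, of t1] unfolding iv P_def Q_def \<Delta>_def by (simp add: lp_self phi0)
  moreover have "\<bar>c1 * \<phi> \<Delta> + c2\<bar> \<le> \<bar>c1 * \<phi> P + c2 * \<phi> Q\<bar>"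
    using mx[rule_format, of t2] unfolding iv P_def Q_def \<Delta>_def by (simp add: lp_self phi0 lp_sym[of p t2 t1])
  ultimately show False by linarith
qed

lemma step2:
  fixes a :: "real^'d \<Rightarrow> 'h::real_inner"
  assumes p: "0 < p" "p \<le> 1" and ker: "\<And>x y. inner (a x) (a y) = \<phi> (lp_pow p x y)"
    and dist: "u \<noteq> v" and c: "c \<noteq> 0"
    and mx: "\<forall>\<theta>. \<bar>inner (a \<theta>) (c *\<^sub>R (a u - \<phi> (lp_pow p u v) *\<^sub>R a v))\<bar>
               \<le> \<bar>inner (a th) (c *\<^sub>R (a u - \<phi> (lp_pow p u v) *\<^sub>R a v))\<bar>"
  shows "th = u"
proof -
  define \<Delta> where "\<Delta> = lp_pow p u v"
  define \<rho> where "\<rho> = \<phi> \<Delta>"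
  have D: "0 < \<Delta>" using lp_nonneg[of p u v] lp_zero[of p u v] dist unfolding \<Delta>_def by force
  have r: "0 \<le> \<rho>" "\<rho> < 1" unfolding \<rho>_def using nonneg[OF D] lt1[OF D] by auto
  have iv: "inner (a \<theta>) (c *\<^sub>R (a u - \<phi> (lp_pow p u v) *\<^sub>R a v)) = c * \<phi> (lp_pow p \<theta> u) + (- c * \<rho>) * \<phi> (lp_pow p \<theta> v)" for \<theta>
    unfolding \<rho>_def \<Delta>_def by (simp add: inner_diff_right ker algebra_simps)
  have atu: "c * \<phi> (lp_pow p u u) + (- c * \<rho>) * \<phi> (lp_pow p u v) = c * (1 - \<rho> * \<rho>)"
    by (simp add: lp_self phi0 \<rho>_def \<Delta>_def algebra_simps)
  have atv: "c * \<phi> (lp_pow p v u) + (- c * \<rho>) * \<phi> (lp_pow p v v) = 0"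
    by (simp add: lp_self phi0 \<rho>_def \<Delta>_def lp_sym[of p v u])
  have "\<rho> * \<rho> \<le> \<rho> * 1" using r by (intro mult_left_mono) auto
  then have "\<rho> * \<rho> < 1" using r by linarith
  then have nz: "c * (1 - \<rho> * \<rho>) \<noteq> 0" using c by simp
  have mu: "\<bar>c * (1 - \<rho> * \<rho>)\<bar> \<le> \<bar>c * \<phi> (lp_pow p th u) + (- c * \<rho>) * \<phi> (lp_pow p th v)\<bar>"
    using mx[rule_format, of u] unfolding iv atu .
  show ?thesis
  proof (cases "\<rho> = 0")
    case True
    have "\<bar>c\<bar> \<le> \<bar>c\<bar> * \<phi> (lp_pow p th u)"
      using mu True nonneg0[OF lp_nonneg[of p th u]] by (simp add: abs_mult)
    then have "1 \<le> \<phi> (lp_pow p th u)" using c by simp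
    then have "lp_pow p th u = 0" using lt1[of "lp_pow p th u"] lp_nonneg[of p th u] by force
    then show ?thesis using lp_zero by blast
  next
    case False
    then have cr: "- c * \<rho> \<noteq> 0" using c by simp
    show ?thesis
    proof (rule ccontr)
      assume ne: "th \<noteq> u"
      show False
      proof (cases "th = v")
        case True
        then show False using mu atv nz by simp
      next
        case nv: False
        define P where "P = lp_pow p th u"
        define Q where "Q = lp_pow p th v"
        have P0: "P \<noteq> 0" using lp_zero[of p th u] ne unfolding P_def by auto
        have Q0: "Q \<noteq> 0" using lp_zero[of p th v] nv unfolding Q_def by auto
        have R: "0 \<le> P" "0 \<le> Q" "\<Delta> \<le> P + Q" "P \<le> Q + \<Delta>" "Q \<le> P + \<Delta>"
          unfolding P_def Q_def \<Delta>_def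
          using lp_nonneg lp_tri[OF p, where x=u and y=th and z=v] lp_tri[OF p, where x=th and y=v and z=u] lp_tri[OF p, where x=th and y=u and z=v]
            lp_sym[of p th u] lp_sym[of p v u] by auto
        have "\<bar>c * \<phi> P + (- c * \<rho>) * \<phi> Q\<bar> < max \<bar>c + (- c * \<rho>) * \<phi> \<Delta>\<bar> \<bar>c * \<phi> \<Delta> + (- c * \<rho>)\<bar>"
          using key2[OF c cr D R] P0 Q0 by blast
        also have "\<dots> = \<bar>c * (1 - \<rho> * \<rho>)\<bar>" unfolding \<rho>_def by (simp add: algebra_simps)
        finally show False using mu unfolding P_def Q_def by linarith
      qed
    qed
  qed
qed

end


lemma bridge:
  assumes "CMF_dictionary a \<phi> p"
  shows "phiL \<phi> (deriv \<phi>) (deriv (deriv \<phi>))"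
proof -
  have C: "CMF \<phi>" and p0: "\<phi> 0 = 1" and lim: "(\<phi> \<longlongrightarrow> 0) at_top"
    using assms unfolding CMF_dictionary_def by auto
  have H1: "\<And>n x. 0 < x \<Longrightarrow> ((deriv ^^ n) \<phi> has_real_derivative (deriv ^^ Suc n) \<phi> x) (at x)"
    and Hc: "continuous (at_right 0) \<phi>"
    and Hs: "\<And>n x. 0 < x \<Longrightarrow> (-1) ^ n * (deriv ^^ n) \<phi> x \<ge> 0"
    using C unfolding CMF_def by auto
  have d1: "\<And>x. 0 < x \<Longrightarrow> (\<phi> has_real_derivative deriv \<phi> x) (at x)"
    using H1[of _ 0] by simp
  have d2: "\<And>x. 0 < x \<Longrightarrow> (deriv \<phi> has_real_derivative deriv (deriv \<phi>) x) (at x)"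
    using H1[of _ 1] by simp
  have d3: "\<And>x. 0 < x \<Longrightarrow> (deriv (deriv \<phi>) has_real_derivative deriv (deriv (deriv \<phi>)) x) (at x)"
    using H1[of _ 2] by (simp add: numeral_eq_Suc)
  have s0: "\<And>x. 0 < x \<Longrightarrow> 0 \<le> \<phi> x" using Hs[of _ 0] by simp
  have s1: "\<And>x. 0 < x \<Longrightarrow> deriv \<phi> x \<le> 0" using Hs[of _ 1] by simp
  have s2: "\<And>x. 0 < x \<Longrightarrow> 0 \<le> deriv (deriv \<phi>) x" using Hs[of _ 2] by (simp add: numeral_eq_Suc)
  have s3: "\<And>x. 0 < x \<Longrightarrow> deriv (deriv (deriv \<phi>)) x \<le> 0" using Hs[of _ 3] by (simp add: numeral_eq_Suc)
  have d2m: "deriv (deriv \<phi>) y \<le> deriv (deriv \<phi>) x" if "0 < x" "x \<le> y" for x y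
  proof (cases "x = y")
    case False
    then have "x < y" using that by simp
    moreover have "\<forall>z. x \<le> z \<and> z \<le> y \<longrightarrow> DERIV (deriv (deriv \<phi>)) z :> deriv (deriv (deriv \<phi>)) z"
      using d3 that by auto
    ultimately obtain z where z: "x < z" "z < y"
      "deriv (deriv \<phi>) y - deriv (deriv \<phi>) x = (y - x) * deriv (deriv (deriv \<phi>)) z"
      using MVT2 by blast
    have "(y - x) * deriv (deriv (deriv \<phi>)) z \<le> 0"
      using s3[of z] z that by (intro mult_nonneg_nonpos) auto
    then show ?thesis using z by linarith
  qed simp
  have cont: "continuous_on {0..} \<phi>"
  proof -
    have "continuous (at x within {0..}) \<phi>" if "x \<in> {0..}" for x
    proof (cases "x = 0")
      case True
      have "at (0::real) within {0..} = at 0 within {0<..}"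
      proof -
        have "{0::real..} - {0} = {0<..} - {0}" by auto
        then show ?thesis by (simp add: at_within_def)
      qed
      then show ?thesis using Hc True by simp
    next
      case False
      then have "0 < x" using that by simp
      then have "isCont \<phi> x" using d1 DERIV_isCont by blast
      then show ?thesis by (rule continuous_at_imp_continuous_at_within)
    qed
    then show ?thesis using continuous_on_eq_continuous_within by blast
  qed
  show ?thesis
    by (unfold_locales) (use cont p0 lim s0 d1 d2 s1 s2 d2m in auto)
qed

context phiL begin

lemma resid1:
  fixes a :: "real^'d \<Rightarrow> 'h::real_inner"
  assumes ker: "\<And>x y. inner (a x) (a y) = \<phi> (lp_pow p x y)"
  shows "omp_residual a (c1 *\<^sub>R a u + c2 *\<^sub>R a v) {u} = c2 *\<^sub>R (a v - \<phi> (lp_pow p v u) *\<^sub>R a u)"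
proof -
  define y where "y = c1 *\<^sub>R a u + c2 *\<^sub>R a v"
  define k where "k = c1 + c2 * \<phi> (lp_pow p v u)"
  have iy: "inner y (a u) = k" unfolding y_def k_def
    by (simp add: inner_add_left ker lp_self phi0)
  have "orth_proj (span (a ` {u})) y = k *\<^sub>R a u"
  proof (rule orth_proj_eq)
    show "subspace (span (a ` {u}))" by (rule subspace_span)
    show "k *\<^sub>R a u \<in> span (a ` {u})" by (simp add: span_base span_scale)
    show "\<forall>w\<in>span (a ` {u}). inner (y - k *\<^sub>R a u) w = 0"
    proof
      fix w assume "w \<in> span (a ` {u})"
      then obtain t where "w = t *\<^sub>R a u" by (auto simp: span_singleton)
      then show "inner (y - k *\<^sub>R a u) w = 0"
        by (simp add: inner_diff_left iy ker lp_self phi0)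
    qed
  qed
  then show ?thesis unfolding omp_residual_def y_def[symmetric] unfolding y_def k_def
    by (simp add: algebra_simps)
qed

lemma resid2:
  fixes a :: "real^'d \<Rightarrow> 'h::real_inner"
  shows "omp_residual a (c1 *\<^sub>R a u + c2 *\<^sub>R a v) {u, v} = 0"
proof -
  define y where "y = c1 *\<^sub>R a u + c2 *\<^sub>R a v"
  have "y \<in> span (a ` {u, v})" unfolding y_def
    by (intro span_add span_scale span_base) auto
  then have "orth_proj (span (a ` {u, v})) y = y"
    by (intro orth_proj_eq subspace_span) auto
  then show ?thesis unfolding omp_residual_def y_def by simp
qed

lemma rnz:
  fixes a :: "real^'d \<Rightarrow> 'h::real_inner"
  assumes ker: "\<And>x y. inner (a x) (a y) = \<phi> (lp_pow p x y)"
    and d: "u \<noteq> v" and c: "c \<noteq> 0"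
  shows "c *\<^sub>R (a u - \<phi> (lp_pow p u v) *\<^sub>R a v) \<noteq> 0"
proof
  define \<rho> where "\<rho> = \<phi> (lp_pow p u v)"
  have D: "0 < lp_pow p u v" using lp_nonneg[of p u v] lp_zero[of p u v] d by force
  have r: "0 \<le> \<rho>" "\<rho> < 1" unfolding \<rho>_def using nonneg[OF D] lt1[OF D] by auto
  have "\<rho> * \<rho> \<le> \<rho> * 1" using r by (intro mult_left_mono) auto
  then have rr: "\<rho> * \<rho> < 1" using r by linarith
  assume "c *\<^sub>R (a u - \<phi> (lp_pow p u v) *\<^sub>R a v) = 0"
  then have z: "a u - \<rho> *\<^sub>R a v = 0" using c unfolding \<rho>_def by simp
  have "inner (a u - \<rho> *\<^sub>R a v) (a u) = 1 - \<rho> * \<rho>"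
    by (simp add: inner_diff_left ker lp_self phi0 \<rho>_def lp_sym[of p v u])
  then show False using z rr by simp
qed

lemma ynz:
  fixes a :: "real^'d \<Rightarrow> 'h::real_inner"
  assumes ker: "\<And>x y. inner (a x) (a y) = \<phi> (lp_pow p x y)"
    and d: "u \<noteq> v" and c: "c1 \<noteq> 0"
  shows "c1 *\<^sub>R a u + c2 *\<^sub>R a v \<noteq> 0"
proof
  define \<rho> where "\<rho> = \<phi> (lp_pow p u v)"
  have D: "0 < lp_pow p u v" using lp_nonneg[of p u v] lp_zero[of p u v] d by force
  have r: "0 \<le> \<rho>" "\<rho> < 1" unfolding \<rho>_def using nonneg[OF D] lt1[OF D] by auto
  have "\<rho> * \<rho> \<le> \<rho> * 1" using r by (intro mult_left_mono) auto
  then have rr: "\<rho> * \<rho> < 1" using r by linarith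
  assume z: "c1 *\<^sub>R a u + c2 *\<^sub>R a v = 0"
  have "inner (c1 *\<^sub>R a u + c2 *\<^sub>R a v) (a u - \<rho> *\<^sub>R a v) = c1 * (1 - \<rho> * \<rho>)"
    by (simp add: inner_diff_right inner_add_left ker lp_self phi0 \<rho>_def lp_sym[of p v u] algebra_simps)
  then show False using z rr c by simp
qed

end


theorem mainTheorem14:
  fixes a :: "real^'d \<Rightarrow> 'h::{real_inner,complete_space}"
    and \<phi> :: "real \<Rightarrow> real" and p :: real
    and t1 t2 :: "real^'d"
  assumes dict: "CMF_dictionary a \<phi> p"
    and distinct: "t1 \<noteq> t2"
    and cond: "\<forall>\<theta> \<in> Cart {t1, t2} - {t1, t2}.
       (let st = (\<lambda>l::2. if l = 1 then t1 else t2);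
            G = (\<chi> l l'. kernel a (st l) (st l')) :: real^2^2;
            g = (\<chi> l. kernel a \<theta> (st l)) :: real^2
        in (\<Sum>l\<in>UNIV. \<bar>(matrix_inv G *v g) $ l\<bar>) < 1)"
  shows "exact_2step_recovery a t1 t2"
proof -
  interpret phiL \<phi> "deriv \<phi>" "deriv (deriv \<phi>)" using bridge[OF dict] .
  have p: "0 < p" "p \<le> 1" and ker: "\<And>x y. inner (a x) (a y) = \<phi> (lp_pow p x y)"
    using dict unfolding CMF_dictionary_def by auto
  show ?thesis unfolding exact_2step_recovery_def omp_reachable_support_def
  proof (intro allI impI)
    fix c1 c2 :: real and S
    assume c1: "c1 \<noteq> 0" and c2: "c2 \<noteq> 0"
    define y where "y = c1 *\<^sub>R a t1 + c2 *\<^sub>R a t2"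
    have y': "y = c2 *\<^sub>R a t2 + c1 *\<^sub>R a t1" unfolding y_def by (simp add: add.commute)
    define r1 where "r1 = c2 *\<^sub>R (a t2 - \<phi> (lp_pow p t2 t1) *\<^sub>R a t1)"
    define r2 where "r2 = c1 *\<^sub>R (a t1 - \<phi> (lp_pow p t1 t2) *\<^sub>R a t2)"
    have R1: "omp_residual a y {t1} = r1" unfolding y_def r1_def by (rule resid1[OF ker])
    have R2: "omp_residual a y {t2} = r2" unfolding y' r2_def by (rule resid1[OF ker])
    have R12: "omp_residual a y {t1, t2} = 0" unfolding y_def by (rule resid2)
    have ny: "y \<noteq> 0" unfolding y_def using ynz[OF ker distinct c1] .
    have n1: "r1 \<noteq> 0" unfolding r1_def using rnz[OF ker _ c2] distinct by auto
    have n2: "r2 \<noteq> 0" unfolding r2_def using rnz[OF ker distinct c1] .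
    have inv: "(S' = {} \<and> r = y) \<or> (S' = {t1} \<and> r = r1) \<or> (S' = {t2} \<and> r = r2) \<or> (S' = {t1, t2} \<and> r = 0)"
      if "omp_state a y S' r" for S' r
      using that
    proof (induction rule: omp_state.induct)
      case init
      then show ?case by simp
    next
      case (step S r th)
      consider "S = {} \<and> r = y" | "S = {t1} \<and> r = r1" | "S = {t2} \<and> r = r2" | "S = {t1, t2} \<and> r = 0"
        using step.IH by blast
      then show ?case
      proof cases
        case 1
        then have "th = t1 \<or> th = t2"
          using step1[OF p ker distinct c1 c2] step.hyps(3) unfolding y_def by blast
        then show ?thesis using 1 R1 R2 by auto
      next
        case 2
        then have "th = t2"
          using step2[OF p ker _ c2, where u=t2 and v=t1 and th=th] distinct step.hyps(3) unfolding r1_def by auto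
        then show ?thesis using 2 R12 by (simp add: insert_commute)
      next
        case 3
        then have "th = t1"
          using step2[OF p ker distinct c1, where th=th] step.hyps(3) unfolding r2_def by auto
        then show ?thesis using 3 R12 by (simp add: insert_commute)
      next
        case 4
        then show ?thesis using step.hyps(2) by simp
      qed
    qed
    assume "omp_state a (c1 *\<^sub>R a t1 + c2 *\<^sub>R a t2) S 0"
    then have "omp_state a y S 0" unfolding y_def .
    from inv[OF this] show "S = {t1, t2}" using ny n1 n2 by auto
  qed
qed


end
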